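(* For every integer $n \geq 1$, the forgetful function \[\varphi_n: [S^n \times S^n, S^n \times S^n]^{\Delta} \longrightarrow [S^n \times S^n, S^n \times S^n]^{\ast}\] is injective; equivalently, the fundamental action of $\pi_{n+1}(S^n \times S^n) = \pi_{n+1}(S^n)\oplus\pi_{n+1}(S^n)$ on $[S^n \times S^n, S^n \times S^n]^{\Delta}$ is trivial.
   Context: Let $\Delta: D = S^n \to S^n \times S^n$ be the diagonal, viewed as a cofibration. For a cofibration $i: D \rightarrowtail X$ and a map $u: D \to U$, $[X,U]^u$ denotes the set of homotopy classes, relative to $D$, of maps $f: X \to U$ with $fi = u$; $[X,U]^{\ast}$ denotes pointed homotopy classes. Here $[S^n\times S^n, S^n\times S^n]^{\Delta}$ means $[X,U]^u$ with $X=U=S^n\times S^n$ and $u=\Delta$, and $\varphi_n$ sends the class of a map relative $D$ to the class of the same map relative the base point $\ast \in D$. The fundamental action: for a cofibration $D \rightarrowtail X$ and $u: D\to U$, let $\Sigma_{\ast} D$ be the pushout of $S^1 \times \ast \to \ast$ and $S^1 \times \ast \rightarrowtail S^1 \times D$; the group $[\Sigma_{\ast} D, U]^u$ (maps under $D$, i.e. pointed self-homotopies of $u$) acts on $[X,U]^u$ by extending such a homotopy from $D$ to a homotopy starting at $f$ via the homotopy extension property and taking the end map. For $D = S^n$ one has $[\Sigma_\ast D,U]^u \cong \pi_{n+1}(U)$. Two classes have the same image under the forgetful map iff they lie in the same orbit of this action. *)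

theory Defs
  imports "HOL-Analysis.Analysis"
begin

end

theory Submission
  imports Defs
begin

lemma hwc_intro:
  fixes h :: "real \<times> 'a::euclidean_space \<Rightarrow> 'b::euclidean_space"
  assumes "continuous_on ({0..1}\<times>S) h" "h \<in> ({0..1}\<times>S) \<rightarrow> U"
    "\<And>x. h(0,x) = p x" "\<And>x. h(1,x) = q x" "\<And>t. t \<in> {0..1} \<Longrightarrow> P (\<lambda>x. h(t,x))"
  shows "homotopic_with_canon P S U p q"
  unfolding homotopic_with_def using assms
  by (intro exI[of _ h]) (auto simp: prod_topology_subtopology subtopology_subtopology euclidean_product_topology Times_Int_Times)

lemma hwc_elim:
  fixes p :: "'a::euclidean_space \<Rightarrow> 'b::euclidean_space"
  assumes "homotopic_with_canon P S U p q"
  obtains h :: "real \<times> 'a \<Rightarrow> 'b" where "continuous_on ({0..1}\<times>S) h" "h \<in> ({0..1}\<times>S) \<rightarrow> U"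
    "\<And>x. h(0,x) = p x" "\<And>x. h(1,x) = q x"
  using assms unfolding homotopic_with_def
  by (auto simp: prod_topology_subtopology subtopology_subtopology euclidean_product_topology Times_Int_Times)

theorem theorem1p1:
  fixes f g :: "'a::euclidean_space \<times> 'a \<Rightarrow> 'a \<times> 'a" and p :: 'a
  assumes "DIM('a) \<ge> 2"
    and "p \<in> sphere 0 1"
    and "\<forall>x\<in>sphere 0 1. f (x, x) = (x, x)"
    and "\<forall>x\<in>sphere 0 1. g (x, x) = (x, x)"
    and "homotopic_with_canon (\<lambda>h. h (p, p) = (p, p))
           (sphere 0 1 \<times> sphere 0 1) (sphere 0 1 \<times> sphere 0 1) f g"
  shows "homotopic_with_canon (\<lambda>h. \<forall>x\<in>sphere 0 1. h (x, x) = (x, x))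
           (sphere 0 1 \<times> sphere 0 1) (sphere 0 1 \<times> sphere 0 1) f g"
proof -
  define Sd :: "'a set" where "Sd = sphere 0 1"
  define X where "X = Sd \<times> Sd"
  define Dg where "Dg = (\<lambda>x. (x,x)) ` Sd"
  have fD: "\<And>x. x \<in> Sd \<Longrightarrow> f (x,x) = (x,x)" and gD: "\<And>x. x \<in> Sd \<Longrightarrow> g (x,x) = (x,x)"
    using assms(3,4) Sd_def by auto
  obtain K :: "real \<times> ('a \<times> 'a) \<Rightarrow> 'a \<times> 'a" where
    Kc: "continuous_on ({0..1}\<times>X) K" and Ki: "K \<in> ({0..1}\<times>X) \<rightarrow> X"
    and K0: "\<And>z. K(0,z) = f z" and K1: "\<And>z. K(1,z) = g z"
    using hwc_elim[OF assms(5)] unfolding X_def Sd_def by metis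
  have gc: "continuous_on X g"
  proof -
    have "continuous_on X (K \<circ> Pair 1)" by (rule continuous_on_o_Pair[OF Kc]) auto
    then show ?thesis by (simp add: o_def K1)
  qed
  have gX: "g z \<in> X" if "z \<in> X" for z
  proof -
    have "K(1,z) \<in> X" using Ki that by auto
    then show ?thesis by (simp add: K1)
  qed
  have fX: "f z \<in> X" if "z \<in> X" for z
  proof -
    have "K(0,z) \<in> X" using Ki that by auto
    then show ?thesis by (simp add: K0)
  qed
  define Q where "Q = (\<lambda>(u::real, z). (fst (K(u,(fst(g z), fst(g z)))), snd (K(u,(snd(g z), snd(g z))))))"
  define N where "N = (\<lambda>(s::real, t::real, z). if t \<le> 1/2 then K(2*t*(1-s), z) else Q((2-2*t)*(1-s), z))"
  define W where "W = {(s::real,t::real,z). s \<in> {0..1} \<and> t \<in> {0..1} \<and> z \<in> X \<and> (t = 1/2 \<longrightarrow> s = 0 \<or> z \<in> Dg)}"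
  have NW_eq: "N = (\<lambda>x. if fst (snd x) \<le> 1/2 then K(2*fst(snd x)*(1 - fst x), snd(snd x))
         else Q((2 - 2*fst(snd x))*(1-fst x), snd (snd x)))"
    by (auto simp: N_def fun_eq_iff)
  have Kcomp: "continuous_on A (\<lambda>x. K(a x))" if "continuous_on A a" "a ` A \<subseteq> {0..1}\<times>X" for A a
    by (rule continuous_on_compose2[OF Kc that])
  have u1: "2*t*(1-s) \<in> {0..1::real}" if "s \<in> {0..1}" "0 \<le> t" "t \<le> 1/2" for s t :: real
  proof -
    have "2*t*(1-s) \<le> 1*1" using that by (intro mult_mono) auto
    then show ?thesis using that by auto
  qed
  have u2: "(2-2*t)*(1-s) \<in> {0..1::real}" if "s \<in> {0..1}" "1/2 \<le> t" "t \<le> 1" for s t :: real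
  proof -
    have "(2-2*t)*(1-s) \<le> 1*1" using that by (intro mult_mono) auto
    then show ?thesis using that by auto
  qed
  have gS: "fst (g z) \<in> Sd" "snd (g z) \<in> Sd" if "z \<in> X" for z
    using gX[OF that] unfolding X_def by auto
  have gcW: "continuous_on A (\<lambda>x. g (snd (snd x)))" if "A \<subseteq> W" for A
    by (rule continuous_on_compose2[OF gc]) (use that in \<open>auto intro!: continuous_intros simp: W_def\<close>)
  have NW: "continuous_on W N"
    unfolding NW_eq
  proof (rule continuous_on_cases_le)
    show "continuous_on {x \<in> W. fst (snd x) \<le> 1 / 2} (\<lambda>x. K (2 * fst (snd x) * (1 - fst x), snd (snd x)))"
      by (rule Kcomp) (auto intro!: continuous_intros u1 simp: W_def)
    let ?A = "{x \<in> W. 1 / 2 \<le> fst (snd x)}"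
    have c1: "continuous_on ?A (\<lambda>x. K ((2 - 2 * fst (snd x)) * (1 - fst x), fst (g (snd (snd x))), fst (g (snd (snd x)))))"
      by (rule Kcomp) (auto intro!: continuous_intros u2 gcW gS simp: W_def X_def)
    have c2: "continuous_on ?A (\<lambda>x. K ((2 - 2 * fst (snd x)) * (1 - fst x), snd (g (snd (snd x))), snd (g (snd (snd x)))))"
      by (rule Kcomp) (auto intro!: continuous_intros u2 gcW gS simp: W_def X_def)
    show "continuous_on ?A (\<lambda>x. Q ((2 - 2 * fst (snd x)) * (1 - fst x), snd (snd x)))"
      unfolding Q_def using c1 c2 by (auto intro!: continuous_intros)
    show "continuous_on W (\<lambda>x. fst (snd x))" by (intro continuous_intros)
    show "K (2 * fst (snd x) * (1 - fst x), snd (snd x)) = Q ((2 - 2 * fst (snd x)) * (1 - fst x), snd (snd x))"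
      if "x \<in> W" "fst (snd x) = 1/2" for x
    proof -
      obtain s t z where x: "x = (s,t,z)" by (cases x) auto
      have t: "t = 1/2" using that x by simp
      have zX: "z \<in> X" and sz: "s = 0 \<or> z \<in> Dg" using that x t by (auto simp: W_def)
      show ?thesis using sz
      proof
        assume "s = 0"
        then show ?thesis using x t gS[OF zX] by (simp add: Q_def K1 fD gD)
      next
        assume "z \<in> Dg"
        then obtain y where "y \<in> Sd" "z = (y,y)" unfolding Dg_def by auto
        then show ?thesis using x t by (simp add: Q_def gD)
      qed
    qed
  qed
  have NWi: "N \<in> W \<rightarrow> X"
  proof
    fix x assume "x \<in> W"
    then obtain s t z where x: "x = (s,t,z)" and st: "s \<in> {0..1}" "t \<in> {0..1}" and zX: "z \<in> X"
      by (auto simp: W_def)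
    show "N x \<in> X"
    proof (cases "t \<le> 1/2")
      case True
      then show ?thesis using Ki u1[OF st(1), of t] st zX x by (auto simp: N_def)
    next
      case False
      let ?u = "(2-2*t)*(1-s)"
      have "?u \<in> {0..1}" using u2[OF st(1), of t] st False by auto
      then have "K(?u, fst (g z), fst (g z)) \<in> X" "K(?u, snd (g z), snd (g z)) \<in> X"
        by (intro funcset_mem[OF Ki]; use gS[OF zX] in \<open>auto simp: X_def\<close>)+
      then show ?thesis using False x unfolding N_def Q_def X_def by auto
    qed
  qed
  define T where "T = {0..1::real} \<times> X"
  define Y where "Y = ({0,1::real} \<times> X) \<union> ({0..1} \<times> Dg)"
  have ANRU: "ANR X" unfolding X_def Sd_def by (simp add: ANR_Times ANR_sphere)
  have cloTS: "closedin (top_of_set T) Y"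
  proof (rule closed_subset)
    show "Y \<subseteq> T" unfolding Y_def T_def Dg_def X_def by auto
    have cX: "closed X" unfolding X_def Sd_def by (intro closed_Times) auto
    have "compact Dg" unfolding Dg_def Sd_def
      by (intro compact_continuous_image continuous_intros) auto
    then have cD: "closed Dg" by (rule compact_imp_closed)
    show "closed Y" unfolding Y_def
      by (intro closed_Un closed_Times cX cD) auto
  qed
  have N0c: "continuous_on T (\<lambda>x. N(0,x))"
    by (rule continuous_on_compose2[OF NW]) (auto intro!: continuous_intros simp: T_def W_def)
  have N0i: "(\<lambda>x. N(0,x)) \<in> T \<rightarrow> X"
    using NWi by (force simp: T_def W_def)
  have YW: "{0..1} \<times> Y \<subseteq> W" unfolding Y_def W_def Dg_def X_def by auto
  have hom: "homotopic_with_canon (\<lambda>x. True) Y X (\<lambda>x. N(0,x)) (\<lambda>x. N(1,x))"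
    by (rule hwc_intro[where h=N]) (use continuous_on_subset[OF NW YW] NWi YW in auto)
  obtain g' where g'c: "continuous_on T g'" and g'i: "image g' T \<subseteq> X"
    and g'Y: "\<And>x. x \<in> Y \<Longrightarrow> g' x = N(1,x)"
    by (rule Borsuk_homotopy_extension_homotopic[OF cloTS _ N0c N0i hom]) (use ANRU in auto)
  define H where "H = (\<lambda>(t::real,z). if t = 0 then f z else if t = 1 then g z else g'(t,z))"
  have Y0: "(0,z) \<in> Y" if "z \<in> X" for z using that Y_def by auto
  have Y1: "(1,z) \<in> Y" if "z \<in> X" for z using that Y_def by auto
  have YD: "(t,(x,x)) \<in> Y" if "x \<in> Sd" "t \<in> {0..1}" for x t using that Y_def Dg_def by auto
  have g'0: "g'(0,z) = f z" if "z \<in> X" for z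
    using g'Y[OF Y0[OF that]] by (simp add: N_def K0)
  have g'1: "g'(1,z) = g z" if "z \<in> X" for z
  proof -
    have "g z \<in> X" using gX that by auto
    then have "fst (g z) \<in> Sd" "snd (g z) \<in> Sd" unfolding X_def by auto
    then show ?thesis
      using g'Y[OF Y1[OF that]] by (simp add: N_def Q_def K0 fD)
  qed
  have g'D: "g'(t,(x,x)) = (x,x)" if "x \<in> Sd" "t \<in> {0..1}" for x t
    using g'Y[OF YD[OF that]] that by (simp add: N_def Q_def K0 fD gD)
  show ?thesis
    unfolding Sd_def[symmetric] X_def[symmetric]
  proof (rule hwc_intro[where h=H])
    show "continuous_on ({0..1} \<times> X) H"
      using g'c unfolding T_def
      by (rule continuous_on_eq) (auto simp: H_def g'0 g'1)
    show "H \<in> {0..1} \<times> X \<rightarrow> X"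
      using g'i unfolding T_def by (auto simp: H_def g'0[symmetric] g'1[symmetric])
    show "H (0, x) = f x" "H (1, x) = g x" for x by (auto simp: H_def)
    show "\<forall>x\<in>Sd. H (t, x, x) = (x, x)" if "t \<in> {0..1}" for t
      using that by (auto simp: H_def fD gD g'D)
  qed
qed

end
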